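(* Let $\mathcal{X},\mathcal{Y},\mathcal{W}$ be finite nonempty sets, $\pi$ a probability distribution on $\mathcal{X}$, $C$ a channel from $\mathcal{X}$ to $\mathcal{Y}$, and $g:\mathcal{W}\times\mathcal{X}\to[0,\infty)$ such that $\pi_x g(w,x)>0$ for at least one pair $(w,x)$. Define $U(w,y)=\sum_{x}\pi_x C_{xy}g(w,x)$, $\alpha=\sum_{w,y}U(w,y)$ (which is $>0$), $P_{WY}(w,y)=U(w,y)/\alpha$, $\xi_w=\sum_y P_{WY}(w,y)$, and the channel $E$ from $\mathcal{W}$ to $\mathcal{Y}$ by $E_{wy}=P_{WY}(w,y)/\xi_w$ when $\xi_w>0$ (and an arbitrary probability distribution on $\mathcal{Y}$ as the row $E_{w\cdot}$ when $\xi_w=0$). Then $$V_g(\pi,C)=\alpha\cdot V_{g_{\mathrm{id}}}(\xi,E),$$ where $g_{\mathrm{id}}:\mathcal{W}\times\mathcal{W}\to\{0,1\}$ is the identity gain function.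
   Context: A channel from a finite set $\mathcal{A}$ to $\mathcal{Y}$ is a stochastic matrix $C=(C_{ay})$ with $C_{ay}\ge0$ and $\sum_y C_{ay}=1$ (the probability of observing $y$ on input $a$). For a prior $\pi$ on $\mathcal{A}$, a set of guesses $\mathcal{W}$ and a gain function $g:\mathcal{W}\times\mathcal{A}\to\mathbb{R}$, the posterior $g$-vulnerability is $V_g(\pi,C)=\sum_{y\in\mathcal{Y}}\max_{w\in\mathcal{W}}\sum_{a\in\mathcal{A}}\pi_a C_{ay}g(w,a)$. The identity gain function on a set $\mathcal{A}$ has guesses $\mathcal{A}$ and $g_{\mathrm{id}}(w,a)=1$ if $w=a$ and $0$ otherwise (so $V_{g_{\mathrm{id}}}$ is the Bayes vulnerability). *)

theory Defs
  imports Main "HOL.Real"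
begin

definition channel :: "('a \<Rightarrow> 'b::finite \<Rightarrow> real) \<Rightarrow> bool" where
  "channel C \<longleftrightarrow> (\<forall>a b. 0 \<le> C a b) \<and> (\<forall>a. (\<Sum>b\<in>UNIV. C a b) = 1)"

definition prob_dist :: "('a::finite \<Rightarrow> real) \<Rightarrow> bool" where
  "prob_dist p \<longleftrightarrow> (\<forall>a. 0 \<le> p a) \<and> (\<Sum>a\<in>UNIV. p a) = 1"

definition post_vuln ::
  "('a::finite \<Rightarrow> real) \<Rightarrow> ('a \<Rightarrow> 'y::finite \<Rightarrow> real) \<Rightarrow> ('w::finite \<Rightarrow> 'a \<Rightarrow> real) \<Rightarrow> real" where
  "post_vuln \<pi> C g = (\<Sum>y\<in>UNIV. Max (range (\<lambda>w. \<Sum>a\<in>UNIV. \<pi> a * C a y * g w a)))"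

definition g_id :: "'a \<Rightarrow> 'a \<Rightarrow> real" where
  "g_id w a = (if w = a then 1 else 0)"

end

theory Submission
  imports Defs
begin

lemma Max_range_div:
  fixes f :: "'w::finite \<Rightarrow> real"
  assumes "c > 0"
  shows "Max (range (\<lambda>w. f w / c)) = Max (range f) / c"
proof -
  have m: "mono_on UNIV (\<lambda>x::real. x / c)" using assms
    by (simp add: mono_onI divide_right_mono)
  have "Max ((\<lambda>x. x / c) ` range f) = Max (range f) / c"
    by (rule mono_Max_commute[symmetric]) (auto simp: monoI divide_right_mono assms less_imp_le)
  thus ?thesis by (simp add: image_image)
qed

theorem theorem2:
  fixes \<pi> :: "'x::finite \<Rightarrow> real"
    and C :: "'x \<Rightarrow> 'y::finite \<Rightarrow> real"
    and g :: "'w::finite \<Rightarrow> 'x \<Rightarrow> real"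
    and E :: "'w \<Rightarrow> 'y \<Rightarrow> real"
  assumes pi: "prob_dist \<pi>"
    and C: "channel C"
    and g_nonneg: "\<forall>w x. 0 \<le> g w x"
    and g_pos: "\<exists>w x. \<pi> x * g w x > 0"
  defines "U \<equiv> (\<lambda>w y. \<Sum>x\<in>UNIV. \<pi> x * C x y * g w x)"
  defines "\<alpha> \<equiv> (\<Sum>w\<in>UNIV. \<Sum>y\<in>UNIV. U w y)"
  defines "P \<equiv> (\<lambda>w y. U w y / \<alpha>)"
  defines "\<xi> \<equiv> (\<lambda>w. \<Sum>y\<in>UNIV. P w y)"
  assumes E: "channel E"
    and E_def: "\<forall>w y. \<xi> w > 0 \<longrightarrow> E w y = P w y / \<xi> w"
  shows "post_vuln \<pi> C g = \<alpha> * post_vuln \<xi> E (g_id :: 'w \<Rightarrow> 'w \<Rightarrow> real)"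
proof -
  have pi0: "\<And>x. 0 \<le> \<pi> x" using pi by (simp add: prob_dist_def)
  have C0: "\<And>x y. 0 \<le> C x y" and C1: "\<And>x. (\<Sum>y\<in>UNIV. C x y) = 1"
    using C by (auto simp: channel_def)
  have U0: "\<And>w y. 0 \<le> U w y" unfolding U_def
    using pi0 C0 g_nonneg by (auto intro!: sum_nonneg mult_nonneg_nonneg)
  have Usum: "\<And>w. (\<Sum>y\<in>UNIV. U w y) = (\<Sum>x\<in>UNIV. \<pi> x * g w x)"
  proof -
    fix w
    have "(\<Sum>y\<in>UNIV. U w y) = (\<Sum>x\<in>UNIV. \<Sum>y\<in>UNIV. \<pi> x * g w x * C x y)"
      unfolding U_def by (subst sum.swap) (simp add: algebra_simps)
    also have "\<dots> = (\<Sum>x\<in>UNIV. \<pi> x * g w x)"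
      by (simp add: sum_distrib_left[symmetric] C1)
    finally show "(\<Sum>y\<in>UNIV. U w y) = (\<Sum>x\<in>UNIV. \<pi> x * g w x)" .
  qed
  have apos: "\<alpha> > 0"
  proof -
    obtain w0 x0 where wx: "\<pi> x0 * g w0 x0 > 0" using g_pos by blast
    have nn: "\<And>w x. 0 \<le> \<pi> x * g w x" using pi0 g_nonneg by simp
    have "0 < (\<Sum>x\<in>UNIV. \<pi> x * g w0 x)"
      using wx nn by (intro sum_pos2[where i=x0]) auto
    also have "\<dots> \<le> (\<Sum>w\<in>UNIV. \<Sum>x\<in>UNIV. \<pi> x * g w x)"
      using nn by (intro member_le_sum) (auto intro: sum_nonneg)
    finally show ?thesis unfolding \<alpha>_def by (simp add: Usum)
  qed
  have P0: "\<And>w y. 0 \<le> P w y" unfolding P_def using U0 apos by simp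
  have key: "\<And>w y. \<xi> w * E w y = P w y"
  proof -
    fix w y
    show "\<xi> w * E w y = P w y"
    proof (cases "\<xi> w > 0")
      case True thus ?thesis using E_def by simp
    next
      case False
      hence "\<xi> w = 0" using P0 unfolding \<xi>_def by (meson linorder_not_le order.antisym sum_nonneg)
      hence "P w y = 0" using P0 unfolding \<xi>_def
        by (simp add: sum_nonneg_eq_0_iff)
      thus ?thesis using \<open>\<xi> w = 0\<close> by simp
    qed
  qed
  have inner: "\<And>w y. (\<Sum>a\<in>UNIV. \<xi> a * E a y * g_id w a) = P w y"
  proof -
    fix w y
    have "(\<Sum>a\<in>UNIV. \<xi> a * E a y * g_id w a) = (\<Sum>a\<in>UNIV. if a = w then \<xi> a * E a y else 0)"
      by (rule sum.cong) (auto simp: g_id_def)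
    also have "\<dots> = \<xi> w * E w y" by simp
    finally show "(\<Sum>a\<in>UNIV. \<xi> a * E a y * g_id w a) = P w y" using key by simp
  qed
  have "post_vuln \<xi> E (g_id :: 'w \<Rightarrow> 'w \<Rightarrow> real) = (\<Sum>y\<in>UNIV. Max (range (\<lambda>w. U w y / \<alpha>)))"
    unfolding post_vuln_def inner P_def by simp
  also have "\<dots> = (\<Sum>y\<in>UNIV. Max (range (\<lambda>w. U w y)) / \<alpha>)"
    by (rule sum.cong[OF refl], rule Max_range_div[OF apos])
  also have "\<dots> = post_vuln \<pi> C g / \<alpha>"
    unfolding post_vuln_def U_def by (simp add: sum_divide_distrib)
  finally show ?thesis using apos by simp
qed

end
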